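(* Let $A\subset\mathbf{Z}_{\geq 0}$ be finite with $0\in A$, $N=\#A\geq 2$, $A(x)=\sum_{a\in A}x^a$, and suppose $A(x)$ satisfies (T1) and (T2). Let $B$ be the set of all real numbers of the form $\sum_{s\in S_A}\frac{k_s}{s}$, where for each $s=p^\beta\in S_A$ ($p$ prime) the integer $k_s$ ranges over $\{0,1,\dots,p-1\}$. Then $\#B=N$ and $A(e^{2\pi i(b-b')})=0$ for all $b,b'\in B$ with $b\neq b'$.
   Context: $\Phi_s(x)$ denotes the $s$-th cyclotomic polynomial. $S_A$ is the set of prime powers $s$ such that $\Phi_s(x)$ divides $A(x)$. Condition (T1): $A(1)=\prod_{s\in S_A}\Phi_s(1)$. Condition (T2): if $s_1,\dots,s_k\in S_A$ are powers of pairwise distinct primes, then $\Phi_{s_1\cdots s_k}(x)$ divides $A(x)$. *)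

theory Defs
  imports "HOL-Analysis.Analysis" "HOL-Number_Theory.Prime_Powers"
    "HOL-Computational_Algebra.Polynomial"
begin

definition cyclotomic :: "nat \<Rightarrow> complex poly" where
  "cyclotomic s = (\<Prod>k\<in>{k\<in>{1..s}. coprime k s}.
      [:- cis (2 * pi * real k / real s), 1:])"

definition mask_poly :: "nat set \<Rightarrow> complex poly" where
  "mask_poly A = (\<Sum>a\<in>A. monom 1 a)"

definition S_set :: "nat set \<Rightarrow> nat set" where
  "S_set A = {s. primepow s \<and> cyclotomic s dvd mask_poly A}"

definition T1 :: "nat set \<Rightarrow> bool" where
  "T1 A \<longleftrightarrow> poly (mask_poly A) 1 = (\<Prod>s\<in>S_set A. poly (cyclotomic s) 1)"

definition T2 :: "nat set \<Rightarrow> bool" where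
  "T2 A \<longleftrightarrow> (\<forall>T. finite T \<and> T \<noteq> {} \<and> T \<subseteq> S_set A \<and> inj_on aprimedivisor T
      \<longrightarrow> cyclotomic (\<Prod>T) dvd mask_poly A)"

end

theory Submission
  imports Defs "HOL-Number_Theory.Totient"
begin

lemma roots_unity_prod:
  assumes n: "n > 0"
  shows "(\<Prod>k<n. [:- cis (2 * pi * real k / real n), 1:]) = (monom 1 n - 1 :: complex poly)"
proof (rule poly_eqI_degree_lead_coeff[where n = n and A = "{z. z ^ n = 1}"])
  have nz: "\<forall>k\<in>{..<n}. [:- cis (2 * pi * real k / real n), 1:] \<noteq> 0" by auto
  have deg: "degree (\<Prod>k<n. [:- cis (2 * pi * real k / real n), 1:]) = n"
    by (subst degree_prod_eq_sum_degree[OF nz]) simp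
  have lc: "lead_coeff (\<Prod>k<n. [:- cis (2 * pi * real k / real n), 1:]) = 1"
    by (simp add: lead_coeff_prod)
  show "coeff (\<Prod>k<n. [:- cis (2 * pi * real k / real n), 1:]) n = coeff (monom 1 n - 1 :: complex poly) n"
    using lc deg n by (simp add: coeff_diff)
  show "n \<le> card {z::complex. z ^ n = 1}" using card_roots_unity_eq[OF n] by simp
  show "degree (\<Prod>k<n. [:- cis (2 * pi * real k / real n), 1:]) \<le> n" using deg by simp
  show "degree (monom 1 n - 1 :: complex poly) \<le> n"
    by (rule order.trans[OF degree_diff_le_max]) (simp add: degree_monom_eq)
  fix z :: complex assume "z \<in> {z. z ^ n = 1}"
  then obtain k where k: "k < n" "z = cis (2 * pi * real k / real n)"
    using Complex.bij_betw_roots_unity[OF n] unfolding bij_betw_def by (metis (no_types, lifting) imageE lessThan_iff)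
  have "poly (\<Prod>k<n. [:- cis (2 * pi * real k / real n), 1:]) z = 0"
    unfolding poly_prod using k by (intro prod_zero) auto
  moreover have "poly (monom 1 n - 1 :: complex poly) z = 0"
    using \<open>z \<in> _\<close> by (simp add: poly_monom)
  ultimately show "poly (\<Prod>k<n. [:- cis (2 * pi * real k / real n), 1:]) z = poly (monom 1 n - 1) z" by simp
qed

lemma cyclotomic_alt:
  assumes "s > 1"
  shows "cyclotomic s = (\<Prod>k\<in>{k\<in>{..<s}. coprime k s}. [:- cis (2 * pi * real k / real s), 1:])"
proof -
  have "{k\<in>{1..s}. coprime k s} = {k\<in>{..<s}. coprime k s}"
  proof (rule set_eqI, rule iffI)
    fix k assume "k \<in> {k\<in>{1..s}. coprime k s}"
    thus "k \<in> {k\<in>{..<s}. coprime k s}" using assms by (cases "k = s") auto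
  next
    fix k assume "k \<in> {k\<in>{..<s}. coprime k s}"
    thus "k \<in> {k\<in>{1..s}. coprime k s}" using assms by (cases "k = 0") auto
  qed
  thus ?thesis unfolding cyclotomic_def by simp
qed

lemma cyclotomic_primepow_at_1:
  assumes "primepow s"
  shows "poly (cyclotomic s) 1 = of_nat (aprimedivisor s)"
proof -
  obtain p b where pb: "prime p" "b > 0" "s = p ^ b" using assms by (auto simp: primepow_def)
  have ap: "aprimedivisor s = p" using pb aprimedivisor_prime_power by blast
  define m where "m = p ^ (b - 1)"
  have sm: "s = p * m" using pb by (simp add: m_def power_eq_if)
  have m0: "m > 0" using pb by (simp add: m_def prime_gt_0_nat)
  have s1: "s > 1" using primepow_gt_Suc_0[OF assms] by simp
  have p0: "p > 0" using pb by (simp add: prime_gt_0_nat)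
  define f where "f = (\<lambda>k. [:- cis (2 * pi * real k / real s), 1:] :: complex poly)"
  have split: "{..<s} = {k\<in>{..<s}. coprime k s} \<union> {k\<in>{..<s}. \<not> coprime k s}" by auto
  have nc: "{k\<in>{..<s}. \<not> coprime k s} = (\<lambda>j. p * j) ` {..<m}"
  proof safe
    fix k assume k: "k < s" "\<not> coprime k s"
    hence "p dvd k" using pb by (metis coprime_commute coprime_power_right_iff prime_imp_coprime)
    then obtain j where "k = p * j" by blast
    with k sm p0 show "k \<in> (\<lambda>j. p * j) ` {..<m}" by auto
  next
    fix j assume "j < m"
    thus "p * j < s" using sm p0 by simp
    assume "coprime (p * j) s"
    thus False using pb by (simp add: prime_gt_1_nat)
  qed
  have "(\<Prod>k<s. f k) = (\<Prod>k\<in>{k\<in>{..<s}. coprime k s}. f k) * (\<Prod>k\<in>{k\<in>{..<s}. \<not> coprime k s}. f k)"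
    by (subst split, rule prod.union_disjoint) auto
  also have "(\<Prod>k\<in>{k\<in>{..<s}. \<not> coprime k s}. f k) = (\<Prod>j<m. f (p * j))"
    unfolding nc using p0 by (subst prod.reindex) (auto simp: inj_on_def)
  also have "\<dots> = (\<Prod>j<m. [:- cis (2 * pi * real j / real m), 1:])"
    using p0 by (intro prod.cong refl) (simp add: f_def sm mult.assoc)
  also have "\<dots> = monom 1 m - 1" by (rule roots_unity_prod[OF m0])
  finally have eq1: "monom 1 s - 1 = cyclotomic s * (monom 1 m - 1)"
    using roots_unity_prod[of s] s1 cyclotomic_alt[OF s1] by (simp add: f_def)
  have eq2: "monom 1 s - 1 = (\<Sum>j<p. monom 1 (m * j)) * (monom 1 m - 1 :: complex poly)"
  proof (rule poly_ext)
    fix x :: complex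
    have "x ^ s - 1 = (x ^ m) ^ p - 1" by (simp add: sm power_mult mult.commute)
    also have "\<dots> = (x ^ m - 1) * (\<Sum>j<p. (x ^ m) ^ j)" by (rule power_diff_1_eq)
    finally show "poly (monom 1 s - 1) x = poly ((\<Sum>j<p. monom 1 (m * j)) * (monom 1 m - 1)) x"
      by (simp add: poly_monom poly_sum mult.commute flip: power_mult)
  qed
  have nz: "monom 1 m - 1 \<noteq> (0 :: complex poly)"
  proof
    assume "monom 1 m - 1 = (0 :: complex poly)"
    hence "coeff (monom 1 m - 1 :: complex poly) m = 0" by simp
    thus False using m0 by simp
  qed
  have "cyclotomic s = (\<Sum>j<p. monom 1 (m * j))" using eq1 eq2 nz by simp
  hence "poly (cyclotomic s) 1 = of_nat p" by (simp add: poly_sum poly_monom)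
  thus ?thesis by (simp add: ap)
qed

lemma H1: assumes "prime (p::nat)" "(d::int) \<noteq> 0" "\<bar>d\<bar> < int p" shows "\<not> int p dvd d"
proof
  assume "int p dvd d"
  hence "\<bar>int p\<bar> \<le> \<bar>d\<bar>" using assms(2) dvd_imp_le_int by blast
  thus False using assms(3) by simp
qed

lemma H0: assumes "primepow (t::nat)"
  obtains k where "prime (aprimedivisor t)" "k > 0" "t = aprimedivisor t ^ k"
proof -
  obtain p k where pk: "prime p" "k > 0" "t = p ^ k" using assms by (auto simp: primepow_def)
  have "aprimedivisor t = p" using pk aprimedivisor_prime_power by blast
  thus ?thesis using that pk by blast
qed

lemma H2: assumes "primepow (t::nat)" "prime q" "q dvd t" shows "q = aprimedivisor t"
proof -
  obtain k where k: "prime (aprimedivisor t)" "k > 0" "t = aprimedivisor t ^ k" using H0[OF assms(1)] .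
  have "q dvd aprimedivisor t ^ k" using assms(3) k(3) by simp
  hence "q dvd aprimedivisor t" using assms(2) prime_dvd_power by blast
  thus ?thesis using k(1) assms(2) primes_dvd_imp_eq by blast
qed

lemma H3: assumes "primepow (t::nat)" shows "aprimedivisor t dvd t" "prime (aprimedivisor t)"
proof -
  obtain k where k: "prime (aprimedivisor t)" "k > 0" "t = aprimedivisor t ^ k" using H0[OF assms(1)] .
  have "aprimedivisor t dvd aprimedivisor t ^ k" using k(2) by (simp add: dvd_power)
  thus "aprimedivisor t dvd t" using k(3) by simp
  show "prime (aprimedivisor t)" by (rule k(1))
qed

lemma H4: assumes "finite T" "\<forall>t\<in>T. primepow t" "prime (q::nat)" "q dvd \<Prod>T"
  shows "\<exists>t\<in>T. q = aprimedivisor t"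
proof -
  have "\<exists>t\<in>T. q dvd t" using prime_dvd_prod_iff[OF assms(1) assms(3), of "\<lambda>x. x"] assms(4) by simp
  then show ?thesis using H2 assms(2,3) by blast
qed

lemma Hint: assumes "prime (q::nat)" "int q dvd int a * b" shows "q dvd a \<or> int q dvd b"
proof -
  have "prime (int q)" using assms(1) by simp
  hence "int q dvd int a \<or> int q dvd b" using assms(2) prime_dvd_mult_iff by blast
  thus ?thesis by simp
qed

lemma Hint2: assumes "prime (q::nat)" "int q dvd a * int b" shows "int q dvd a \<or> q dvd b"
proof -
  have "int q dvd int b * a" using assms(2) by (simp add: mult.commute)
  thus ?thesis using Hint[OF assms(1)] by blast
qed

lemma alg: "(x::real) > 0 \<Longrightarrow> y > 0 \<Longrightarrow> a / x + c / y = (a * y + c * x) / (x * y)"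
  by (simp add: field_simps)

lemma alg2: "(x::real) > 0 \<Longrightarrow> y > 0 \<Longrightarrow> z > 0 \<Longrightarrow> a / (x * y) + c / (x * z) = (a * z + c * y) / (x * y * z)"
  by (simp add: field_simps)

lemma key:
  fixes d :: "nat \<Rightarrow> int"
  assumes "finite S" "S \<noteq> {}" "\<forall>s\<in>S. primepow s"
    "\<forall>s\<in>S. d s \<noteq> 0 \<and> \<bar>d s\<bar> < int (aprimedivisor s)"
  shows "\<exists>T J. T \<subseteq> S \<and> T \<noteq> {} \<and> inj_on aprimedivisor T \<and>
     (\<forall>t\<in>T. \<not> int (aprimedivisor t) dvd J) \<and>
     (\<Sum>s\<in>S. real_of_int (d s) / real s) = real_of_int J / real (\<Prod>T)"
  using assms
proof (induction S rule: finite_linorder_max_induct)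
  case empty
  then show ?case by simp
next
  case (insert b S')
  have pp: "\<forall>s\<in>insert b S'. primepow s" using insert.prems by blast
  have dd: "\<forall>s\<in>insert b S'. d s \<noteq> 0 \<and> \<bar>d s\<bar> < int (aprimedivisor s)" using insert.prems by blast
  define p where "p = aprimedivisor b"
  have bpp: "primepow b" using pp by blast
  obtain \<beta> where pb0: "\<beta> > 0" "b = p ^ \<beta>" using H0[OF bpp] unfolding p_def by blast
  have pp1: "prime p" unfolding p_def by (rule H3(2)[OF bpp])
  have pb: "prime p" "\<beta> > 0" "b = p ^ \<beta>" using pb0 pp1 by blast+
  have bS: "b \<notin> S'" using insert.hyps by auto
  have "\<bar>d b\<bar> < int p" "d b \<noteq> 0" using dd unfolding p_def by blast+
  hence ndb: "\<not> int p dvd d b" using H1[of p "d b"] pp1 by blast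
  have sum_ins: "(\<Sum>s\<in>insert b S'. real_of_int (d s) / real s) =
      real_of_int (d b) / real b + (\<Sum>s\<in>S'. real_of_int (d s) / real s)"
    using insert.hyps bS by simp
  have b0: "real b > 0" using pb prime_gt_0_nat by simp
  show ?case
  proof (cases "S' = {}")
    case True
    show ?thesis
      by (rule exI[of _ "{b}"], rule exI[of _ "d b"]) (use True ndb p_def in auto)
  next
    case False
    have pre: "\<forall>s\<in>S'. primepow s" "\<forall>s\<in>S'. d s \<noteq> 0 \<and> \<bar>d s\<bar> < int (aprimedivisor s)" using pp dd by auto
    obtain T' J' where IH:
      "T' \<subseteq> S'" "T' \<noteq> {}" "inj_on aprimedivisor T'" "\<forall>t\<in>T'. \<not> int (aprimedivisor t) dvd J'"
      "(\<Sum>s\<in>S'. real_of_int (d s) / real s) = real_of_int J' / real (\<Prod>T')"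
      using insert.IH[OF False pre] by blast
    have fT': "finite T'" using IH(1) insert.hyps(1) finite_subset by blast
    have ppT': "\<forall>t\<in>T'. primepow t" using IH(1) pp by auto
    have M'00: "\<Prod>T' > 0" using ppT' primepow_gt_0_nat by (intro prod_pos) auto
    hence M'0: "real (\<Prod>T') > 0" by (simp only: of_nat_0_less_iff)
    show ?thesis
    proof (cases "\<forall>t\<in>T'. aprimedivisor t \<noteq> p")
      case True
      define J where "J = J' * int b + d b * int (\<Prod>T')"
      have bT: "b \<notin> T'" using bS IH(1) by auto
      show ?thesis
      proof (intro exI[of _ "insert b T'"] exI[of _ J] conjI)
        show "insert b T' \<subseteq> insert b S'" using IH(1) by auto
        show "insert b T' \<noteq> {}" by simp
        show "inj_on aprimedivisor (insert b T')" using IH(3) True p_def by auto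
        show "\<forall>t\<in>insert b T'. \<not> int (aprimedivisor t) dvd J"
        proof
          fix t assume t: "t \<in> insert b T'"
          show "\<not> int (aprimedivisor t) dvd J"
          proof (cases "t = b")
            case True
            show ?thesis
            proof
              assume "int (aprimedivisor t) dvd J"
              hence "int p dvd J" using True p_def by simp
              moreover have "int p dvd J' * int b" using pb by simp
              ultimately have "int p dvd d b * int (\<Prod>T')" unfolding J_def
                using dvd_add_right_iff by blast
              hence "int p dvd d b \<or> p dvd \<Prod>T'" using Hint2 pb(1) by blast
              thus False using ndb H4[OF fT' ppT' pb(1)] \<open>\<forall>t\<in>T'. aprimedivisor t \<noteq> p\<close> by auto
            qed
          next
            case False
            hence tT: "t \<in> T'" using t by simp
            define q where "q = aprimedivisor t"
            have q: "prime q" "q dvd t" using H3 ppT' tT q_def by auto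
            show ?thesis
            proof
              assume "int (aprimedivisor t) dvd J"
              hence "int q dvd J" using q_def by simp
              moreover have "q dvd \<Prod>T'" using q(2) tT fT' by (meson dvd_prodI dvd_trans)
              hence "int q dvd d b * int (\<Prod>T')" by (metis dvd_mult int_dvd_int_iff)
              ultimately have "int q dvd J' * int b" unfolding J_def
                using dvd_add_left_iff by blast
              hence "int q dvd J' \<or> q dvd b" using Hint2 q(1) by blast
              moreover have "\<not> q dvd b"
              proof
                assume "q dvd b"
                hence "q = p" using H2[of b q] pp q(1) p_def by auto
                thus False using True tT q_def \<open>\<forall>t\<in>T'. aprimedivisor t \<noteq> p\<close> by auto
              qed
              ultimately show False using IH(4) tT q_def by auto
            qed
          qed
        qed
        show "(\<Sum>s\<in>insert b S'. real_of_int (d s) / real s) = real_of_int J / real (\<Prod>(insert b T'))"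
        proof -
          have "(\<Sum>s\<in>insert b S'. real_of_int (d s) / real s) = real_of_int (d b) / real b + real_of_int J' / real (\<Prod>T')"
            using sum_ins IH(5) by simp
          also have "\<dots> = (real_of_int (d b) * real (\<Prod>T') + real_of_int J' * real b) / (real b * real (\<Prod>T'))"
            by (rule alg[OF b0 M'0])
          also have "\<dots> = real_of_int J / real (\<Prod>(insert b T'))"
            using bT fT' by (simp add: J_def algebra_simps)
          finally show ?thesis .
        qed
      qed
    next
      case False
      then obtain t0 where t0: "t0 \<in> T'" "aprimedivisor t0 = p" by auto
      have "t0 < b" using t0 IH(1) insert.hyps(2) by auto
      have t0pp: "primepow t0" using ppT' t0 by blast
      obtain \<gamma> where g: "\<gamma> > 0" "t0 = p ^ \<gamma>" using H0[OF t0pp] unfolding t0(2) by blast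
      have "p ^ \<gamma> < p ^ \<beta>" using \<open>t0 < b\<close> g(2) pb(3) by simp
      hence gb: "\<gamma> < \<beta>" using power_strict_increasing_iff[OF prime_gt_1_nat[OF pb(1)]] by blast
      define e where "e = \<beta> - \<gamma>"
      have e1: "e > 0" using gb unfolding e_def by simp
      have "\<beta> = \<gamma> + e" using gb unfolding e_def by simp
      hence "b = p ^ (\<gamma> + e)" using pb(3) by simp
      hence e2: "b = t0 * p ^ e" unfolding power_add g(2) .
      note e = e1 e2
      define R where "R = \<Prod>(T' - {t0})"
      have MR: "\<Prod>T' = t0 * R" unfolding R_def using fT' t0(1) by (simp add: prod.remove)
      define J where "J = J' * int p ^ e + d b * int R"
      have bT: "b \<notin> T' - {t0}" using bS IH(1) by auto
      have fR: "finite (T' - {t0})" using fT' by simp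
      have ppR: "\<forall>t\<in>T' - {t0}. primepow t" using ppT' by auto
      have "t0 * R > 0" using MR M'00 by simp
      hence R0: "real R > 0" and t00: "real t0 > 0" by simp_all
      have neq: "aprimedivisor t \<noteq> p" if tt1: "t \<in> T' - {t0}" for t
      proof
        assume tt2: "aprimedivisor t = p"
        hence "aprimedivisor t = aprimedivisor t0" using t0(2) by simp
        hence "t = t0" using inj_onD[OF IH(3)] tt1 t0(1) by blast
        thus False using tt1 by blast
      qed
      show ?thesis
      proof (intro exI[of _ "insert b (T' - {t0})"] exI[of _ J] conjI)
        show "insert b (T' - {t0}) \<subseteq> insert b S'" using IH(1) by auto
        show "insert b (T' - {t0}) \<noteq> {}" by simp
        show "inj_on aprimedivisor (insert b (T' - {t0}))"
        proof -
          have i1: "inj_on aprimedivisor (T' - {t0})" by (rule inj_on_subset[OF IH(3)]) blast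
          have i2: "aprimedivisor b \<notin> aprimedivisor ` (T' - {t0})"
          proof
            assume "aprimedivisor b \<in> aprimedivisor ` (T' - {t0})"
            then obtain t where tt: "t \<in> T' - {t0}" "aprimedivisor b = aprimedivisor t" by blast
            have "aprimedivisor t \<noteq> p" by (rule neq[OF tt(1)])
            thus False using tt(2) unfolding p_def by simp
          qed
          have i3: "T' - {t0} - {b} = T' - {t0}" using bT by blast
          show ?thesis unfolding inj_on_insert i3 using i1 i2 by blast
        qed
        show "\<forall>t\<in>insert b (T' - {t0}). \<not> int (aprimedivisor t) dvd J"
        proof
          fix t assume t: "t \<in> insert b (T' - {t0})"
          show "\<not> int (aprimedivisor t) dvd J"
          proof (cases "t = b")
            case True
            show ?thesis
            proof
              assume "int (aprimedivisor t) dvd J"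
              hence "int p dvd J" using True p_def by simp
              moreover have "int p dvd J' * int p ^ e" using e by (simp add: dvd_power)
              ultimately have "int p dvd d b * int R" unfolding J_def
                using dvd_add_right_iff by blast
              hence "int p dvd d b \<or> p dvd R" using Hint2 pb(1) by blast
              thus False using ndb H4[OF fR ppR pb(1)] neq unfolding R_def by auto
            qed
          next
            case False
            hence tT: "t \<in> T' - {t0}" using t by simp
            define q where "q = aprimedivisor t"
            have q: "prime q" "q dvd t" using H3 ppR tT q_def by auto
            show ?thesis
            proof
              assume "int (aprimedivisor t) dvd J"
              hence "int q dvd J" using q_def by simp
              moreover have "q dvd R" unfolding R_def using q(2) tT fR by (meson dvd_prodI dvd_trans)
              hence "int q dvd d b * int R" by simp
              ultimately have "int q dvd J' * int p ^ e" unfolding J_def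
                using dvd_add_left_iff by blast
              hence "int q dvd J' \<or> q dvd p ^ e" using Hint2[of q J' "p ^ e"] q(1) by simp
              moreover have "\<not> q dvd p ^ e"
              proof
                assume "q dvd p ^ e"
                hence "q dvd p" using q(1) prime_dvd_power by blast
                hence "q = p" using q(1) pb(1) primes_dvd_imp_eq by blast
                thus False using neq tT q_def by auto
              qed
              ultimately show False using IH(4) tT q_def by auto
            qed
          qed
        qed
        have "(\<Sum>s\<in>insert b S'. real_of_int (d s) / real s) =
           real_of_int (d b) / (real t0 * real p ^ e) + real_of_int J' / (real t0 * real R)"
          using sum_ins IH(5) MR e by simp
        also have "\<dots> = (real_of_int (d b) * real R + real_of_int J' * real p ^ e) / (real t0 * real p ^ e * real R)"
          by (rule alg2[OF t00 _ R0]) (use pb prime_gt_0_nat in simp)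
        also have "\<dots> = real_of_int J / (real t0 * real p ^ e * real R)"
          by (simp add: J_def algebra_simps)
        also have "real t0 * real p ^ e * real R = real (\<Prod>(insert b (T' - {t0})))"
          using fR bT e unfolding R_def by simp
        finally show "(\<Sum>s\<in>insert b S'. real_of_int (d s) / real s) = real_of_int J / real (\<Prod>(insert b (T' - {t0})))" .
      qed
    qed
  qed
qed

lemma cyc_degree: "degree (cyclotomic s) = totient s"
proof -
  have nz: "\<forall>k\<in>{k\<in>{1..s}. coprime k s}. [:- cis (2 * pi * real k / real s), 1:] \<noteq> 0" by auto
  have "degree (cyclotomic s) = card {k\<in>{1..s}. coprime k s}"
    unfolding cyclotomic_def by (subst degree_prod_eq_sum_degree[OF nz]) simp
  also have "{k\<in>{1..s}. coprime k s} = totatives s" unfolding totatives_def by auto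
  finally show ?thesis by (simp add: totient_def)
qed

lemma primepow_le_totient: assumes "primepow s" shows "s \<le> 2 * totient s"
proof -
  obtain k where k: "prime (aprimedivisor s)" "k > 0" "s = aprimedivisor s ^ k" using H0[OF assms] .
  define p where "p = aprimedivisor s"
  have p: "prime p" "s = p ^ k" using k unfolding p_def by blast+
  have t: "totient s = p ^ (k - 1) * (p - 1)" using totient_prime_power[OF p(1) k(2)] p(2) by simp
  have "p \<ge> 2" using p(1) prime_ge_2_nat by blast
  hence "p \<le> 2 * (p - 1)" by arith
  hence A: "p ^ (k - 1) * p \<le> p ^ (k - 1) * (2 * (p - 1))" by (rule mult_le_mono2)
  have B: "2 * totient s = p ^ (k - 1) * (2 * (p - 1))" unfolding t by (rule mult.left_commute)
  have "p ^ k = p ^ (k - 1) * p" using k(2) by (cases k) (simp_all add: mult.commute)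
  hence C: "s = p ^ (k - 1) * p" using p(2) by simp
  show ?thesis using A B C by linarith
qed

lemma mask_nz: assumes "finite A" "0 \<in> A" shows "mask_poly A \<noteq> 0"
proof -
  have "coeff (mask_poly A) 0 = (\<Sum>a\<in>A. if a = 0 then 1 else 0)"
    unfolding mask_poly_def by (simp add: coeff_sum coeff_monom)
  also have "\<dots> = 1" using assms by (simp add: sum.delta)
  finally show ?thesis by auto
qed

lemma mask_at_1: "poly (mask_poly A) 1 = of_nat (card A)"
  unfolding mask_poly_def by (simp add: poly_sum poly_monom)

lemma finite_S: assumes "finite A" "0 \<in> A" shows "finite (S_set A)"
proof (rule finite_subset[of _ "{..2 * degree (mask_poly A)}"])
  show "S_set A \<subseteq> {..2 * degree (mask_poly A)}"
  proof
    fix s assume "s \<in> S_set A"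
    hence s: "primepow s" "cyclotomic s dvd mask_poly A" unfolding S_set_def by auto
    have "totient s > 0" using primepow_gt_0_nat[OF s(1)] by simp
    hence "cyclotomic s \<noteq> 0" using cyc_degree[of s] by auto
    hence "degree (cyclotomic s) \<le> degree (mask_poly A)" using dvd_imp_degree s(2) mask_nz[OF assms] by blast
    thus "s \<in> {..2 * degree (mask_poly A)}" using primepow_le_totient[OF s(1)] cyc_degree[of s] by simp
  qed
qed simp

lemma coprime_from_key:
  assumes "finite T" "\<forall>t\<in>T. primepow t" "\<forall>t\<in>T. \<not> int (aprimedivisor t) dvd J"
  shows "coprime J (int (\<Prod>T))"
proof -
  have "coprime J (\<Prod>t\<in>T. int t)"
  proof (rule prod_coprime_right)
    fix t assume t: "t \<in> T"
    obtain k where k: "prime (aprimedivisor t)" "k > 0" "t = aprimedivisor t ^ k" using H0 assms(2) t by blast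
    have "prime (int (aprimedivisor t))" using k(1) by simp
    hence c1: "coprime J (int (aprimedivisor t) ^ k)" using prime_imp_power_coprime[of "int (aprimedivisor t)" J k] assms(3) t by blast
    have c2: "int t = int (aprimedivisor t) ^ k" using k(3) by (metis of_nat_power)
    show "coprime J (int t)" unfolding c2 by (rule c1)
  qed
  thus ?thesis by simp
qed

lemma prod_gt_1: assumes "finite T" "T \<noteq> {}" "\<forall>t\<in>T. primepow t" shows "\<Prod>T > (1::nat)"
proof -
  obtain t where t: "t \<in> T" using assms(2) by blast
  have "\<Prod>T = t * \<Prod>(T - {t})" using assms(1) t by (simp add: prod.remove)
  moreover have "\<Prod>(T - {t}) > 0" using assms(3) primepow_gt_0_nat by (intro prod_pos) auto
  moreover have "t > 1" using assms(3) t primepow_gt_Suc_0 by fastforce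
  moreover have "t * \<Prod>(T - {t}) \<ge> t" using calculation(2) by simp
  ultimately show ?thesis by linarith
qed

lemma diff_lemma:
  assumes "finite S" "\<forall>s\<in>S. primepow s"
    "\<forall>s\<in>S. k s < aprimedivisor s" "\<forall>s\<in>S. k' s < aprimedivisor s" "\<exists>s\<in>S. k s \<noteq> k' s"
  shows "\<exists>T J. T \<subseteq> S \<and> T \<noteq> {} \<and> inj_on aprimedivisor T \<and> coprime J (int (\<Prod>T)) \<and> \<Prod>T > 1 \<and>
     (\<Sum>s\<in>S. real (k s) / real s) - (\<Sum>s\<in>S. real (k' s) / real s) = real_of_int J / real (\<Prod>T)"
proof -
  define S0 where "S0 = {s\<in>S. k s \<noteq> k' s}"
  define d where "d = (\<lambda>s. int (k s) - int (k' s))"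
  have fS0: "finite S0" "S0 \<noteq> {}" "S0 \<subseteq> S" using assms unfolding S0_def by auto
  have dd: "\<forall>s\<in>S0. d s \<noteq> 0 \<and> \<bar>d s\<bar> < int (aprimedivisor s)"
  proof
    fix s assume "s \<in> S0"
    hence "k s < aprimedivisor s" "k' s < aprimedivisor s" "k s \<noteq> k' s" using assms(3,4) unfolding S0_def by auto
    thus "d s \<noteq> 0 \<and> \<bar>d s\<bar> < int (aprimedivisor s)" unfolding d_def abs_less_iff by linarith
  qed
  obtain T J where TJ: "T \<subseteq> S0" "T \<noteq> {}" "inj_on aprimedivisor T" "\<forall>t\<in>T. \<not> int (aprimedivisor t) dvd J"
    "(\<Sum>s\<in>S0. real_of_int (d s) / real s) = real_of_int J / real (\<Prod>T)"
    using key[of S0 d] fS0 dd assms(2) by blast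
  have fT: "finite T" using TJ(1) fS0(1) finite_subset by blast
  have ppT: "\<forall>t\<in>T. primepow t" using TJ(1) fS0(3) assms(2) by blast
  have "(\<Sum>s\<in>S. real (k s) / real s) - (\<Sum>s\<in>S. real (k' s) / real s) = (\<Sum>s\<in>S. real_of_int (d s) / real s)"
    unfolding d_def by (simp add: sum_subtractf diff_divide_distrib)
  also have "\<dots> = (\<Sum>s\<in>S0. real_of_int (d s) / real s)"
    by (rule sum.mono_neutral_right[OF assms(1) fS0(3)]) (simp add: S0_def d_def)
  finally have eq: "(\<Sum>s\<in>S. real (k s) / real s) - (\<Sum>s\<in>S. real (k' s) / real s) = real_of_int J / real (\<Prod>T)"
    using TJ(5) by simp
  have "T \<subseteq> S" using TJ(1) fS0(3) by blast
  thus ?thesis using TJ(2,3) eq coprime_from_key[OF fT ppT TJ(4)] prod_gt_1[OF fT TJ(2) ppT]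
    by blast
qed

lemma root_lemma:
  assumes "coprime J (int M)" "M > 1"
  shows "poly (cyclotomic M) (exp (2 * pi * \<i> * complex_of_real (real_of_int J / real M))) = 0"
proof -
  define r where "r = J mod int M"
  define q where "q = J div int M"
  have M0: "int M > 0" using assms(2) by simp
  have r: "0 \<le> r" "r < int M" using M0 unfolding r_def by auto
  have cr: "coprime r (int M)" using assms(1) M0 unfolding r_def by simp
  have "r \<noteq> 0"
  proof
    assume "r = 0"
    hence "is_unit (int M)" using cr by simp
    thus False using assms(2) by simp
  qed
  define kk where "kk = nat r"
  have kk: "int kk = r" using r unfolding kk_def by simp
  have "coprime (int kk) (int M)" using cr kk by simp
  hence ckk: "coprime kk M" by simp
  have kkr: "kk \<in> {1..M}" using r \<open>r \<noteq> 0\<close> kk by auto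
  have Jqr: "J = q * int M + r" unfolding q_def r_def by simp
  have JM: "real_of_int J / real M = real_of_int q + real kk / real M"
    using assms(2) by (simp add: Jqr kk [symmetric] field_simps)
  have "exp (2 * pi * \<i> * complex_of_real (real_of_int J / real M)) = cis (2 * pi * (real_of_int J / real M))"
    by (simp add: cis_conv_exp mult_ac)
  also have "2 * pi * (real_of_int J / real M) = 2 * pi * real_of_int q + 2 * pi * real kk / real M"
    unfolding JM by (simp add: algebra_simps)
  also have "cis \<dots> = cis (2 * pi * real_of_int q) * cis (2 * pi * real kk / real M)"
    by (rule cis_mult[symmetric])
  also have "cis (2 * pi * real_of_int q) = 1" by (rule cis_multiple_2pi) simp
  finally have z: "exp (2 * pi * \<i> * complex_of_real (real_of_int J / real M)) = cis (2 * pi * real kk / real M)"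
    by simp
  have kin: "kk \<in> {k\<in>{1..M}. coprime k M}" using kkr ckk by simp
  have "poly [:- cis (2 * pi * real kk / real M), 1:] (cis (2 * pi * real kk / real M)) = 0" by simp
  hence "\<exists>k\<in>{k\<in>{1..M}. coprime k M}. poly [:- cis (2 * pi * real k / real M), 1:] (cis (2 * pi * real kk / real M)) = 0"
    using kin by blast
  thus ?thesis unfolding cyclotomic_def poly_prod z by (intro prod_zero) simp_all
qed

theorem mainTheorem2:
  fixes A :: "nat set"
  assumes "finite A" and "0 \<in> A" and "card A \<ge> 2"
    and "T1 A" and "T2 A"
  defines "B \<equiv> {(\<Sum>s\<in>S_set A. real (k s) / real s) | k :: nat \<Rightarrow> nat.
                   \<forall>s\<in>S_set A. k s < aprimedivisor s}"
  shows "card B = card A \<and>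
    (\<forall>b\<in>B. \<forall>b'\<in>B. b \<noteq> b' \<longrightarrow>
       poly (mask_poly A) (exp (2 * pi * \<i> * complex_of_real (b - b'))) = 0)"
proof -
  define S where "S = S_set A"
  have finS: "finite S" using finite_S assms(1,2) unfolding S_def by blast
  have ppS: "\<forall>s\<in>S. primepow s" unfolding S_def S_set_def by auto
  have cardA: "card A = (\<Prod>s\<in>S. aprimedivisor s)"
  proof -
    have "(of_nat (card A) :: complex) = (\<Prod>s\<in>S. poly (cyclotomic s) 1)"
      using assms(4) mask_at_1[of A] unfolding T1_def S_def by simp
    also have "\<dots> = (\<Prod>s\<in>S. of_nat (aprimedivisor s))"
      using ppS cyclotomic_primepow_at_1 by (intro prod.cong refl) auto
    also have "\<dots> = of_nat (\<Prod>s\<in>S. aprimedivisor s)" by simp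
    finally show ?thesis by (simp only: of_nat_eq_iff)
  qed
  define v where "v = (\<lambda>k::nat\<Rightarrow>nat. \<Sum>s\<in>S. real (k s) / real s)"
  define K where "K = PiE S (\<lambda>s. {..<aprimedivisor s})"
  have BK: "B = v ` K"
  proof
    show "B \<subseteq> v ` K"
    proof
      fix b assume "b \<in> B"
      then obtain k where k: "b = v k" "\<forall>s\<in>S. k s < aprimedivisor s"
        unfolding B_def v_def S_def by blast
      have "restrict k S \<in> K" using k(2) unfolding K_def by auto
      moreover have "v (restrict k S) = v k" unfolding v_def by (intro sum.cong) auto
      ultimately show "b \<in> v ` K" using k(1) by (metis image_eqI)
    qed
    show "v ` K \<subseteq> B"
    proof
      fix b assume "b \<in> v ` K"
      then obtain k where k: "k \<in> K" "b = v k" by auto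
      have "\<forall>s\<in>S. k s < aprimedivisor s" using k(1) unfolding K_def by auto
      thus "b \<in> B" using k(2) unfolding B_def v_def S_def by blast
    qed
  qed
  have diff: "\<And>k k'. \<forall>s\<in>S. k s < aprimedivisor s \<Longrightarrow> \<forall>s\<in>S. k' s < aprimedivisor s \<Longrightarrow>
      \<exists>s\<in>S. k s \<noteq> k' s \<Longrightarrow> \<exists>T J. T \<subseteq> S \<and> T \<noteq> {} \<and> inj_on aprimedivisor T \<and>
      coprime J (int (\<Prod>T)) \<and> \<Prod>T > 1 \<and> v k - v k' = real_of_int J / real (\<Prod>T)"
    unfolding v_def by (rule diff_lemma[OF finS ppS])
  have bnd: "\<And>k. k \<in> K \<Longrightarrow> \<forall>s\<in>S. k s < aprimedivisor s" unfolding K_def by auto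
  have inj: "inj_on v K"
  proof (rule inj_onI)
    fix k k' assume kk: "k \<in> K" "k' \<in> K" "v k = v k'"
    show "k = k'"
    proof (rule ccontr)
      assume "k \<noteq> k'"
      hence "\<exists>s\<in>S. k s \<noteq> k' s" using kk(1,2) PiE_ext unfolding K_def by blast
      then obtain T J where TJ: "coprime J (int (\<Prod>T))" "\<Prod>T > 1" "v k - v k' = real_of_int J / real (\<Prod>T)"
        using diff[OF bnd[OF kk(1)] bnd[OF kk(2)]] by blast
      have "J \<noteq> 0"
      proof
        assume "J = 0"
        hence "is_unit (int (\<Prod>T))" using TJ(1) by simp
        hence "int (\<Prod>T) dvd int 1" by (simp only: of_nat_1)
        hence "\<Prod>T dvd 1" by (simp only: int_dvd_int_iff)
        thus False using TJ(2) by simp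
      qed
      moreover have "real (\<Prod>T) \<noteq> 0" using TJ(2) by (metis gr_implies_not0 of_nat_eq_0_iff)
      ultimately have "v k - v k' \<noteq> 0" using TJ(3) by simp
      thus False using kk(3) by simp
    qed
  qed
  have "card B = card (v ` K)" using BK by simp
  also have "\<dots> = card K" by (rule card_image[OF inj])
  also have "\<dots> = (\<Prod>s\<in>S. card {..<aprimedivisor s})" unfolding K_def by (rule card_PiE[OF finS])
  also have "\<dots> = card A" using cardA by simp
  finally have "card B = card A" .
  moreover have "\<forall>b\<in>B. \<forall>b'\<in>B. b \<noteq> b' \<longrightarrow>
       poly (mask_poly A) (exp (2 * pi * \<i> * complex_of_real (b - b'))) = 0"
  proof (intro ballI impI)
    fix b b' assume bb: "b \<in> B" "b' \<in> B" "b \<noteq> b'"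
    obtain k k' where k: "k \<in> K" "b = v k" "k' \<in> K" "b' = v k'" using bb(1,2) BK by auto
    have "\<exists>s\<in>S. k s \<noteq> k' s"
    proof (rule ccontr)
      assume "\<not> (\<exists>s\<in>S. k s \<noteq> k' s)"
      hence "v k = v k'" unfolding v_def by (intro sum.cong) auto
      thus False using bb(3) k by simp
    qed
    then obtain T J where TJ: "T \<subseteq> S" "T \<noteq> {}" "inj_on aprimedivisor T" "coprime J (int (\<Prod>T))"
        "\<Prod>T > 1" "v k - v k' = real_of_int J / real (\<Prod>T)"
      using diff[OF bnd[OF k(1)] bnd[OF k(3)]] by blast
    have "finite T" using TJ(1) finS finite_subset by blast
    hence dvd: "cyclotomic (\<Prod>T) dvd mask_poly A"
      using assms(5) TJ(1,2,3) unfolding T2_def S_def by blast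
    have root: "poly (cyclotomic (\<Prod>T)) (exp (2 * pi * \<i> * complex_of_real (real_of_int J / real (\<Prod>T)))) = 0"
      by (rule root_lemma[OF TJ(4,5)])
    have bb': "b - b' = real_of_int J / real (\<Prod>T)" using TJ(6) k by simp
    from dvd obtain r where r: "mask_poly A = cyclotomic (\<Prod>T) * r" by (rule dvdE)
    show "poly (mask_poly A) (exp (2 * pi * \<i> * complex_of_real (b - b'))) = 0"
      unfolding bb' r poly_mult root by simp
  qed
  ultimately show ?thesis by blast
qed

end
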